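(* Let $n$ be a positive integer. Then $\mathsf{NAADT}(\mathsf{OMB}_n) = n$. Moreover, $\mathrm{spar}(\mathsf{OMB}_n) = n$ if $n$ is even, and $\mathrm{spar}(\mathsf{OMB}_n) = n+1$ if $n$ is odd.
   Context: $\mathsf{OMB}_n:\{0,1\}^n\to\{0,1\}$ is defined by $\mathsf{OMB}_n(x)=1$ if $\max\{i\in[n]:x_i=0\}$ is odd and $0$ otherwise, with $\mathsf{OMB}_n(1^n)=0$. $\mathsf{AND}_S(x)=\prod_{i\in S}x_i$. $\mathsf{NAADT}(f)$ is the minimum $k$ for which there exist $S_1,\dots,S_k\subseteq[n]$ such that $f(x)$ is determined by $\mathsf{AND}_{S_1}(x),\dots,\mathsf{AND}_{S_k}(x)$ for all $x$. $\mathrm{spar}(f)$ is the number of nonzero coefficients $\widetilde f(S)$ in the unique expansion $f=\sum_{S\subseteq[n]}\widetilde f(S)\mathsf{AND}_S$ with real coefficients. *)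

theory Defs
  imports Complex_Main
begin

text \<open>Inputs x in {0,1}^n are modelled as x :: nat => bool, true meaning bit 1,
  with coordinates indexed by [n] = {1..n} and all other coordinates False.\<close>

definition cube :: "nat \<Rightarrow> (nat \<Rightarrow> bool) set" where
  "cube n = {x. \<forall>i. i \<notin> {1..n} \<longrightarrow> \<not> x i}"

definition OMB :: "nat \<Rightarrow> (nat \<Rightarrow> bool) \<Rightarrow> real" where
  "OMB n x = (if (\<exists>i\<in>{1..n}. \<not> x i) \<and> odd (Max {i\<in>{1..n}. \<not> x i}) then 1 else 0)"

definition AND :: "nat set \<Rightarrow> (nat \<Rightarrow> bool) \<Rightarrow> real" where
  "AND S x = (\<Prod>i\<in>S. if x i then 1 else 0)"

definition determined_by :: "nat \<Rightarrow> ((nat \<Rightarrow> bool) \<Rightarrow> real) \<Rightarrow> nat set list \<Rightarrow> bool" where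
  "determined_by n f Ss \<longleftrightarrow> set Ss \<subseteq> Pow {1..n} \<and>
     (\<forall>x\<in>cube n. \<forall>y\<in>cube n. (\<forall>S\<in>set Ss. AND S x = AND S y) \<longrightarrow> f x = f y)"

definition NAADT :: "nat \<Rightarrow> ((nat \<Rightarrow> bool) \<Rightarrow> real) \<Rightarrow> nat" where
  "NAADT n f = (LEAST k. \<exists>Ss. length Ss = k \<and> determined_by n f Ss)"

definition and_coeffs :: "nat \<Rightarrow> ((nat \<Rightarrow> bool) \<Rightarrow> real) \<Rightarrow> nat set \<Rightarrow> real" where
  "and_coeffs n f = (THE c. (\<forall>S. S \<notin> Pow {1..n} \<longrightarrow> c S = 0) \<and>
      (\<forall>x\<in>cube n. f x = (\<Sum>S\<in>Pow {1..n}. c S * AND S x)))"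

definition spar :: "nat \<Rightarrow> ((nat \<Rightarrow> bool) \<Rightarrow> real) \<Rightarrow> nat" where
  "spar n f = card {S. S \<subseteq> {1..n} \<and> and_coeffs n f S \<noteq> 0}"

end

theory Submission
  imports Defs
begin

definition mz :: "nat \<Rightarrow> (nat \<Rightarrow> bool) \<Rightarrow> nat" where
  "mz n x = (if \<exists>i\<in>{1..n}. \<not> x i then Max {i\<in>{1..n}. \<not> x i} else 0)"

definition TT :: "nat \<Rightarrow> nat \<Rightarrow> nat set" where
  "TT n k = {Suc k..n}"

definition dd :: "nat \<Rightarrow> nat \<Rightarrow> real" where
  "dd n k = (if odd k then 1 else if k < n then -1 else 0)"

definition ee :: "nat \<Rightarrow> real" where
  "ee k = (if odd k then 1 else -1)"

definition cc :: "nat \<Rightarrow> nat set \<Rightarrow> real" where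
  "cc n S = (if S \<in> TT n ` {..n} then dd n (n - card S) else 0)"

lemma OMB_mz: "OMB n x = (if odd (mz n x) then 1 else 0)"
  unfolding OMB_def mz_def by auto

lemma mz_le: "mz n x \<le> n"
  unfolding mz_def by (auto intro!: Max.boundedI)

lemma AND_fin: "finite S \<Longrightarrow> AND S x = (if \<forall>i\<in>S. x i then 1 else 0)"
  unfolding AND_def by (auto simp: prod_zero_iff)

lemma AND_TT: "AND (TT n k) x = (if mz n x \<le> k then 1 else 0)"
proof -
  have "(\<forall>i\<in>{Suc k..n}. x i) \<longleftrightarrow> mz n x \<le> k"
  proof (cases "\<exists>i\<in>{1..n}. \<not> x i")
    case True
    let ?Z = "{i\<in>{1..n}. \<not> x i}"
    have fz: "finite ?Z" by simp
    have ne: "?Z \<noteq> {}" using True by auto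
    have mm: "Max ?Z \<in> ?Z" using Max_in[OF fz ne] .
    have mzv: "mz n x = Max ?Z" using True unfolding mz_def by simp
    show ?thesis
    proof
      assume a: "\<forall>i\<in>{Suc k..n}. x i"
      show "mz n x \<le> k"
      proof (rule ccontr)
        assume "\<not> mz n x \<le> k"
        then have "Max ?Z \<in> {Suc k..n}" using mm mzv by auto
        then show False using a mm by auto
      qed
    next
      assume b: "mz n x \<le> k"
      show "\<forall>i\<in>{Suc k..n}. x i"
      proof
        fix i assume i: "i \<in> {Suc k..n}"
        show "x i"
        proof (rule ccontr)
          assume "\<not> x i"
          then have "i \<in> ?Z" using i by auto
          then have "i \<le> Max ?Z" using fz by simp
          then show False using i b mzv by auto
        qed
      qed
    qed
  next
    case False
    then show ?thesis unfolding mz_def by auto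
  qed
  then show ?thesis unfolding TT_def by (simp add: AND_fin)
qed

lemma card_TT: "card (TT n k) = n - k"
  unfolding TT_def by simp

lemma inj_TT: "inj_on (TT n) {..n}"
proof
  fix a b assume "a \<in> {..n}" "b \<in> {..n}" "TT n a = TT n b"
  then have "n - a = n - b" using card_TT by metis
  then show "a = b" using \<open>a \<in> {..n}\<close> \<open>b \<in> {..n}\<close> by auto
qed

lemma TT_sub: "TT n k \<subseteq> {1..n}"
  unfolding TT_def by auto

lemma esum: "m \<le> n \<Longrightarrow> (\<Sum>k=m..<n. ee k) = (if odd m then 1 else 0) - (if odd n then 1 else 0)"
proof (induction n)
  case 0
  then show ?case by simp
next
  case (Suc n)
  show ?case
  proof (cases "m = Suc n")
    case True
    then show ?thesis by simp
  next
    case False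
    then have "m \<le> n" using Suc.prems by simp
    then show ?thesis using Suc.IH by (simp add: ee_def)
  qed
qed

lemma dsum: "m \<le> n \<Longrightarrow> (\<Sum>k=m..n. dd n k) = (if odd m then 1 else 0)"
proof -
  assume mn: "m \<le> n"
  have "(\<Sum>k=m..n. dd n k) = (\<Sum>k=m..<n. dd n k) + dd n n"
    using mn by (simp add: sum.last_plus)
  also have "(\<Sum>k=m..<n. dd n k) = (\<Sum>k=m..<n. ee k)"
    by (rule sum.cong) (auto simp: dd_def ee_def)
  finally show ?thesis using esum[OF mn] by (simp add: dd_def)
qed

lemma cc_TT: "k \<le> n \<Longrightarrow> cc n (TT n k) = dd n k"
  unfolding cc_def using card_TT by auto

lemma expansion: "OMB n x = (\<Sum>S\<in>Pow {1..n}. cc n S * AND S x)"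
proof -
  have "(\<Sum>S\<in>Pow {1..n}. cc n S * AND S x) = (\<Sum>S\<in>TT n ` {..n}. cc n S * AND S x)"
    by (rule sum.mono_neutral_right) (auto simp: TT_def cc_def)
  also have "\<dots> = (\<Sum>k\<in>{..n}. cc n (TT n k) * AND (TT n k) x)"
    by (rule sum.reindex[OF inj_TT, unfolded comp_def])
  also have "\<dots> = (\<Sum>k\<in>{..n}. if mz n x \<le> k then dd n k else 0)"
    by (rule sum.cong) (auto simp: cc_TT AND_TT)
  also have "\<dots> = (\<Sum>k\<in>{..n} \<inter> {k. mz n x \<le> k}. dd n k)"
    by (simp add: sum.inter_restrict)
  also have "{..n} \<inter> {k. mz n x \<le> k} = {mz n x..n}" by auto
  also have "(\<Sum>k=mz n x..n. dd n k) = (if odd (mz n x) then 1 else 0)"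
    using dsum mz_le by blast
  finally show ?thesis by (simp add: OMB_mz)
qed

lemma coeffs_unique:
  assumes z: "\<forall>S. S \<notin> Pow {1..n} \<longrightarrow> c S = 0"
    and s: "\<forall>x\<in>cube n. (\<Sum>S\<in>Pow {1..n}. c S * AND S x) = 0"
  shows "c = (\<lambda>_. 0)"
proof (rule ccontr)
  assume "c \<noteq> (\<lambda>_. 0)"
  then obtain S1 where "c S1 \<noteq> 0" by auto
  then obtain S0 where S0: "c S0 \<noteq> 0" and mn: "\<forall>S'. c S' \<noteq> 0 \<longrightarrow> card S0 \<le> card S'"
    using ex_has_least_nat[of "\<lambda>S. c S \<noteq> 0" S1 card] by blast
  have sub: "S0 \<subseteq> {1..n}" using z S0 by auto
  then have fin: "finite S0" using finite_subset by blast
  define x where "x = (\<lambda>i. i \<in> S0)"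
  have xc: "x \<in> cube n" using sub unfolding cube_def x_def by auto
  have "(\<Sum>S\<in>Pow {1..n}. c S * AND S x) = (\<Sum>S\<in>Pow {1..n}. if S = S0 then c S0 else 0)"
  proof (rule sum.cong)
    fix T assume T: "T \<in> Pow {1..n}"
    then have fT: "finite T" using finite_subset by blast
    show "c T * AND T x = (if T = S0 then c S0 else 0)"
    proof (cases "T \<subseteq> S0")
      case True
      show ?thesis
      proof (cases "T = S0")
        case True
        then show ?thesis using fT by (simp add: AND_fin x_def)
      next
        case False
        then have "T \<subset> S0" using \<open>T \<subseteq> S0\<close> by auto
        then have "card T < card S0" using fin psubset_card_mono by blast
        then have "c T = 0" using mn by force
        then show ?thesis using False by simp
      qed
    next
      case False
      then have "AND T x = 0" using fT by (auto simp: AND_fin x_def)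
      then show ?thesis using False by auto
    qed
  qed simp
  also have "\<dots> = c S0" using sub by simp
  finally show False using s xc S0 by auto
qed

lemma cc_out: "S \<notin> Pow {1..n} \<Longrightarrow> cc n S = 0"
proof -
  assume "S \<notin> Pow {1..n}"
  then have "S \<notin> TT n ` {..n}" using TT_sub by blast
  then show ?thesis by (simp add: cc_def)
qed

lemma and_coeffs_OMB: "and_coeffs n (OMB n) = cc n"
  unfolding and_coeffs_def
proof (rule the_equality)
  show "(\<forall>S. S \<notin> Pow {1..n} \<longrightarrow> cc n S = 0) \<and>
        (\<forall>x\<in>cube n. OMB n x = (\<Sum>S\<in>Pow {1..n}. cc n S * AND S x))"
    using cc_out expansion by (intro conjI allI impI ballI) auto
next
  fix c assume h: "(\<forall>S. S \<notin> Pow {1..n} \<longrightarrow> c S = 0) \<and>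
        (\<forall>x\<in>cube n. OMB n x = (\<Sum>S\<in>Pow {1..n}. c S * AND S x))"
  have "(\<lambda>S. c S - cc n S) = (\<lambda>_. 0)"
  proof (rule coeffs_unique)
    show "\<forall>S. S \<notin> Pow {1..n} \<longrightarrow> c S - cc n S = 0"
      using conjunct1[OF h] cc_out by auto
    show "\<forall>x\<in>cube n. (\<Sum>S\<in>Pow {1..n}. (c S - cc n S) * AND S x) = 0"
    proof
      fix x assume "x \<in> cube n"
      then have "OMB n x = (\<Sum>S\<in>Pow {1..n}. c S * AND S x)" using conjunct2[OF h] by (rule bspec[rotated])
      moreover have "OMB n x = (\<Sum>S\<in>Pow {1..n}. cc n S * AND S x)" by (rule expansion)
      ultimately show "(\<Sum>S\<in>Pow {1..n}. (c S - cc n S) * AND S x) = 0"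
        by (simp add: left_diff_distrib sum_subtractf)
    qed
  qed
  then show "c = cc n"
  proof -
    assume e: "(\<lambda>S. c S - cc n S) = (\<lambda>_. 0)"
    show "c = cc n"
    proof
      fix S show "c S = cc n S" using fun_cong[OF e, of S] by simp
    qed
  qed
qed

lemma spar_OMB: "spar n (OMB n) = card {k. k \<le> n \<and> dd n k \<noteq> 0}"
proof -
  have "{S. S \<subseteq> {1..n} \<and> cc n S \<noteq> 0} = TT n ` {k. k \<le> n \<and> dd n k \<noteq> 0}"
  proof
    show "{S. S \<subseteq> {1..n} \<and> cc n S \<noteq> 0} \<subseteq> TT n ` {k. k \<le> n \<and> dd n k \<noteq> 0}"
    proof
      fix S assume "S \<in> {S. S \<subseteq> {1..n} \<and> cc n S \<noteq> 0}"
      then have c: "cc n S \<noteq> 0" by simp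
      then obtain k where k: "k \<le> n" "S = TT n k" unfolding cc_def by (auto split: if_splits)
      then show "S \<in> TT n ` {k. k \<le> n \<and> dd n k \<noteq> 0}" using c cc_TT by auto
    qed
    show "TT n ` {k. k \<le> n \<and> dd n k \<noteq> 0} \<subseteq> {S. S \<subseteq> {1..n} \<and> cc n S \<noteq> 0}"
      using cc_TT by (auto simp: TT_def)
  qed
  moreover have "inj_on (TT n) {k. k \<le> n \<and> dd n k \<noteq> 0}"
    by (rule inj_on_subset[OF inj_TT]) auto
  ultimately show ?thesis
    unfolding spar_def and_coeffs_OMB by (simp add: card_image)
qed

definition uu :: "nat \<Rightarrow> nat \<Rightarrow> nat \<Rightarrow> bool" where
  "uu n k = (\<lambda>i. k < i \<and> i \<le> n)"

lemma mz_uu: "k \<le> n \<Longrightarrow> mz n (uu n k) = k"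
proof -
  assume kn: "k \<le> n"
  have Z: "{i\<in>{1..n}. \<not> uu n k i} = {1..k}" using kn by (auto simp: uu_def)
  show ?thesis
  proof (cases "k = 0")
    case True
    then show ?thesis unfolding mz_def uu_def by auto
  next
    case False
    then have "\<exists>i\<in>{1..n}. \<not> uu n k i" using kn by (auto simp: uu_def intro!: bexI[of _ 1])
    moreover have "Max {1..k} = k" using False by (intro Max_eqI) auto
    ultimately show ?thesis unfolding mz_def using Z by simp
  qed
qed

lemma lower:
  assumes d: "determined_by n (OMB n) Ss"
  shows "n \<le> length Ss"
proof -
  have sub: "set Ss \<subseteq> Pow {1..n}" using d unfolding determined_by_def by simp
  have "{1..n} \<subseteq> Min ` set Ss"
  proof
    fix j assume j: "j \<in> {1..n}"
    then obtain k where k: "j = Suc k" "k < n" by (cases j) auto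
    have uc: "\<And>m. uu n m \<in> cube n" unfolding cube_def uu_def by auto
    have "OMB n (uu n k) \<noteq> OMB n (uu n (Suc k))"
      using k by (simp add: OMB_mz mz_uu)
    then obtain S where S: "S \<in> set Ss" "AND S (uu n k) \<noteq> AND S (uu n (Suc k))"
      using d uc unfolding determined_by_def by blast
    have Ssub: "S \<subseteq> {1..n}" using S sub by auto
    then have fS: "finite S" using finite_subset by blast
    have A: "\<And>m. AND S (uu n m) = (if \<forall>i\<in>S. m < i then 1 else 0)"
      using Ssub fS by (auto simp: AND_fin uu_def)
    have neq: "(\<forall>i\<in>S. k < i) \<noteq> (\<forall>i\<in>S. Suc k < i)"
      using S(2) unfolding A by (cases "\<forall>i\<in>S. k < i"; cases "\<forall>i\<in>S. Suc k < i") simp_all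
    have a: "\<forall>i\<in>S. k < i"
    proof (rule ccontr)
      assume na: "\<not> (\<forall>i\<in>S. k < i)"
      then have "\<not> (\<forall>i\<in>S. Suc k < i)" using Suc_lessD by blast
      then show False using neq na by simp
    qed
    then have "\<not> (\<forall>i\<in>S. Suc k < i)" using neq by simp
    then obtain i where i: "i \<in> S" "\<not> Suc k < i" by blast
    then have "i = Suc k" using a by force
    then have jS: "Suc k \<in> S" using i by simp
    have "Min S = Suc k"
      using a jS fS by (intro Min_eqI) auto
    then show "j \<in> Min ` set Ss" using S(1) k by force
  qed
  then have "card {1..n} \<le> card (Min ` set Ss)" by (intro card_mono) auto
  also have "\<dots> \<le> card (set Ss)" by (rule card_image_le) simp
  also have "\<dots> \<le> length Ss" by (rule card_length)
  finally show ?thesis by simp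
qed

lemma upper: "determined_by n (OMB n) (map (TT n) [0..<n])"
  unfolding determined_by_def
proof (intro conjI ballI impI)
  show "set (map (TT n) [0..<n]) \<subseteq> Pow {1..n}" using TT_sub by auto
next
  fix x y assume h: "\<forall>S\<in>set (map (TT n) [0..<n]). AND S x = AND S y"
  have e: "\<And>k. k \<le> n \<Longrightarrow> (mz n x \<le> k) = (mz n y \<le> k)"
  proof -
    fix k assume kn: "k \<le> n"
    show "(mz n x \<le> k) = (mz n y \<le> k)"
    proof (cases "k < n")
      case True
      then have "AND (TT n k) x = AND (TT n k) y" using h by auto
      then show ?thesis by (simp add: AND_TT split: if_splits)
    next
      case False
      then show ?thesis using kn mz_le[of n x] mz_le[of n y] by auto
    qed
  qed
  have "mz n x = mz n y"
    using e[OF mz_le[of n x]] e[OF mz_le[of n y]] by auto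
  then show "OMB n x = OMB n y" by (simp add: OMB_mz)
qed

theorem claim4p6:
  fixes n :: nat
  assumes "n \<ge> 1"
  shows "NAADT n (OMB n) = n \<and>
         (even n \<longrightarrow> spar n (OMB n) = n) \<and>
         (odd n \<longrightarrow> spar n (OMB n) = n + 1)"
proof (intro conjI impI)
  show "NAADT n (OMB n) = n"
    unfolding NAADT_def
  proof (rule Least_equality)
    show "\<exists>Ss. length Ss = n \<and> determined_by n (OMB n) Ss"
      using upper by (intro exI[of _ "map (TT n) [0..<n]"]) simp
  next
    fix y assume "\<exists>Ss. length Ss = y \<and> determined_by n (OMB n) Ss"
    then show "n \<le> y" using lower by blast
  qed
next
  assume ev: "even n"
  have "{k. k \<le> n \<and> dd n k \<noteq> 0} = {..<n}" using ev by (auto simp: dd_def)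
  then show "spar n (OMB n) = n" by (simp add: spar_OMB)
next
  assume od: "odd n"
  have "{k. k \<le> n \<and> dd n k \<noteq> 0} = {..n}" using od by (auto simp: dd_def)
  then show "spar n (OMB n) = n + 1" by (simp add: spar_OMB)
qed

end
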